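(* For every integer $n\ge 3$, the prism graph $P_2\,\square\,C_n$ (of order $2n$) is not orientable $\mathbb{Z}_{2n}$-distance magic.
   Context: $P_2$ is the path on 2 vertices and $C_n$ the cycle on $n$ vertices. The Cartesian product $G\,\square\,H$ has vertex set $V(G)\times V(H)$, with $(g,h)$ adjacent to $(g',h')$ iff either $g=g'$ and $h$ is adjacent to $h'$ in $H$, or $h=h'$ and $g$ is adjacent to $g'$ in $G$. For an oriented graph $\vec G$ and a vertex $x$, $N^+(x)$ is the set of vertices $y$ with an arc from $x$ to $y$, and $N^-(x)$ is the set of vertices $y$ with an arc from $y$ to $x$. For an Abelian group $\Gamma$ of order $n$, a directed $\Gamma$-distance magic labeling of an oriented graph $\vec G$ of order $n$ is a bijection $\vec l:V\to\Gamma$ such that there is $\mu\in\Gamma$ with $\sum_{y\in N^+(x)}\vec l(y)-\sum_{y\in N^-(x)}\vec l(y)=\mu$ for every vertex $x$. A simple graph $G$ of order $n$ is orientable $\Gamma$-distance magic if some orientation of its edges admits a directed $\Gamma$-distance magic labeling. $\mathbb{Z}_n$ is the cyclic group of integers modulo $n$. *)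

theory Defs
  imports Main
begin

text \<open>A simple graph is given by a vertex set V and a symmetric irreflexive
edge relation E (only its restriction to V matters).\<close>

definition is_orientation :: "'a set \<Rightarrow> ('a \<Rightarrow> 'a \<Rightarrow> bool) \<Rightarrow> ('a \<times> 'a) set \<Rightarrow> bool" where
  "is_orientation V E A \<longleftrightarrow>
     A \<subseteq> {(x, y). x \<in> V \<and> y \<in> V \<and> E x y} \<and>
     (\<forall>x\<in>V. \<forall>y\<in>V. E x y \<longrightarrow> ((x, y) \<in> A \<longleftrightarrow> (y, x) \<notin> A))"

definition out_nbrs :: "('a \<times> 'a) set \<Rightarrow> 'a \<Rightarrow> 'a set" where
  "out_nbrs A x = {y. (x, y) \<in> A}"

definition in_nbrs :: "('a \<times> 'a) set \<Rightarrow> 'a \<Rightarrow> 'a set" where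
  "in_nbrs A x = {y. (y, x) \<in> A}"

definition directed_Zm_distance_magic_labeling ::
  "nat \<Rightarrow> 'a set \<Rightarrow> ('a \<times> 'a) set \<Rightarrow> ('a \<Rightarrow> int) \<Rightarrow> bool" where
  "directed_Zm_distance_magic_labeling m V A l \<longleftrightarrow>
     bij_betw l V {0..<int m} \<and>
     (\<exists>\<mu>. \<forall>x\<in>V.
        ((\<Sum>y\<in>out_nbrs A x. l y) - (\<Sum>y\<in>in_nbrs A x. l y)) mod int m = \<mu> mod int m)"

definition orientable_Zm_distance_magic :: "nat \<Rightarrow> 'a set \<Rightarrow> ('a \<Rightarrow> 'a \<Rightarrow> bool) \<Rightarrow> bool" where
  "orientable_Zm_distance_magic m V E \<longleftrightarrow>
     (\<exists>A l. is_orientation V E A \<and> directed_Zm_distance_magic_labeling m V A l)"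

definition prism_vertices :: "nat \<Rightarrow> (nat \<times> nat) set" where
  "prism_vertices n = {0, 1} \<times> {0..<n}"

definition prism_edge :: "nat \<Rightarrow> nat \<times> nat \<Rightarrow> nat \<times> nat \<Rightarrow> bool" where
  "prism_edge n u v \<longleftrightarrow>
     (fst u = fst v \<and> (snd v = (snd u + 1) mod n \<or> snd u = (snd v + 1) mod n)) \<or>
     (snd u = snd v \<and> fst u \<noteq> fst v)"

end

theory Submission imports Defs begin

lemma sum_shift_periodic:
  fixes f :: "nat \<Rightarrow> int"
  assumes "\<And>j. f (j + n) = f j"
  shows "(\<Sum>j<n. f (j + k)) = (\<Sum>j<n. f j)"
proof (induction k)
  case 0 then show ?case by simp
next
  case (Suc k)
  have "(\<Sum>j<Suc n. f (j + k)) = f (0 + k) + (\<Sum>j<n. f (Suc j + k))"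
    by (rule sum.lessThan_Suc_shift)
  moreover have "(\<Sum>j<Suc n. f (j + k)) = (\<Sum>j<n. f (j + k)) + f (n + k)" by simp
  moreover have "f (n + k) = f k" using assms[of k] by (simp add: add.commute)
  ultimately have "(\<Sum>j<n. f (Suc j + k)) = (\<Sum>j<n. f (j + k))" by simp
  then show ?case using Suc by simp
qed

lemma sum_lessThan_add_split:
  fixes f :: "nat \<Rightarrow> int"
  shows "(\<Sum>j<m + p. f j) = (\<Sum>j<m. f j) + (\<Sum>j<p. f (m + j))"
  by (induction p) (simp_all add: add.assoc)

lemma sum_periodic_mult:
  fixes f :: "nat \<Rightarrow> int"
  assumes "\<And>j. f (j + p) = f j"
  shows "(\<Sum>j<p*q. f j) = int q * (\<Sum>j<p. f j)"
proof (induction q)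
  case 0 then show ?case by simp
next
  case (Suc q)
  have per: "f (j + p*k) = f j" for j k
  proof (induction k)
    case 0 then show ?case by simp
  next
    case (Suc k)
    have "f (j + p * Suc k) = f ((j + p*k) + p)" by (simp add: algebra_simps)
    also have "\<dots> = f (j + p*k)" by (rule assms)
    finally show ?case using Suc by simp
  qed
  have "(\<Sum>j<p*Suc q. f j) = (\<Sum>j<p*q + p. f j)" by (simp add: algebra_simps)
  also have "\<dots> = (\<Sum>j<p*q. f j) + (\<Sum>j<p. f (p*q + j))"
    by (rule sum_lessThan_add_split)
  also have "(\<Sum>j<p. f (p*q + j)) = (\<Sum>j<p. f j)" using per by (simp add: add.commute)
  finally show ?case using Suc by (simp add: algebra_simps)
qed

lemma comb:
  fixes a b :: "nat \<Rightarrow> int" and n :: nat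
  assumes n3: "n \<ge> 3"
    and a01: "\<And>j. a j = 0 \<or> a j = 1" and b01: "\<And>j. b j = 0 \<or> b j = 1"
    and ap: "\<And>j. a (j + n) = a j" and bp: "\<And>j. b (j + n) = b j"
    and E1: "\<And>j. even (a j + a (j+2) + b (j+1))"
    and E2: "\<And>j. even (b j + b (j+2) + a (j+1))"
    and W: "(\<Sum>j<n. a j) + (\<Sum>j<n. b j) = int n"
  shows False
proof -
  have T: "even (a j + a (j+2) + a (j+4))" for j
  proof -
    have e1: "j + 1 + 2 = j + 3" "j + 1 + 1 = j + 2" "j + 2 + 2 = j + 4" "j + 2 + 1 = j + 3" by simp_all
    have "even (b (j+1) + b (j+3) + a (j+2))" using E2[of "j+1"] by (simp only: e1)
    moreover have "even (a (j+2) + a (j+4) + b (j+3))" using E1[of "j+2"] by (simp only: e1)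
    ultimately show ?thesis using E1[of j] by presburger
  qed
  have ba: "b (j+1) = a (j+4)" for j
  proof -
    have "even (b (j+1) + a (j+4))" using E1[of j] T[of j] by presburger
    then show ?thesis using a01[of "j+4"] b01[of "j+1"] by auto
  qed
  have "(\<Sum>j<n. b j) = (\<Sum>j<n. a (j+3))"
  proof (rule sum.cong[OF refl])
    fix j assume "j \<in> {..<n}"
    have "b j = b ((j + n - 1) + 1)" using bp[of j] n3 by simp
    also have "\<dots> = a (j + n - 1 + 4)" by (rule ba)
    also have "\<dots> = a ((j + 3) + n)" using n3 by (simp add: algebra_simps)
    also have "\<dots> = a (j+3)" by (rule ap)
    finally show "b j = a (j+3)" .
  qed
  also have "\<dots> = (\<Sum>j<n. a j)" using sum_shift_periodic[of a n 3] ap by blast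
  finally have s2: "2 * (\<Sum>j<n. a j) = int n" using W by simp
  define s where "s = (\<Sum>j<n. a j)"
  have s2': "2 * s = int n" using s2 s_def by simp
  have a6: "a (j+6) = a j" for j
  proof -
    have e2: "j + 2 + 2 = j + 4" "j + 2 + 4 = j + 6" by simp_all
    have "even (a (j+2) + a (j+4) + a (j+6))" using T[of "j+2"] by (simp only: e2)
    then have "even (a j + a (j+6))" using T[of j] by presburger
    then show ?thesis using a01[of j] a01[of "j+6"] by auto
  qed
  have a6q: "a (j + 6*q) = a j" for j q
  proof (induction q)
    case 0 then show ?case by simp
  next
    case (Suc q)
    have "a (j + 6 * Suc q) = a ((j + 6*q) + 6)" by (simp add: algebra_simps)
    also have "\<dots> = a (j + 6*q)" by (rule a6)
    finally show ?case using Suc by simp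
  qed
  define q where "q = n div 6"
  define r where "r = n mod 6"
  have nqr: "n = 6*q + r" using q_def r_def by simp
  have ar: "a (j + r) = a j" for j
  proof -
    have "a (j + r) = a ((j + r) + 6*q)" using a6q by simp
    also have "\<dots> = a (j + n)" using nqr by (simp add: algebra_simps)
    also have "\<dots> = a j" by (rule ap)
    finally show ?thesis .
  qed
  have evn: "even n" using s2' by presburger
  have "r = 0 \<or> r = 2 \<or> r = 4" using evn r_def by presburger
  moreover {
    assume "r = 2"
    then have a2: "a (j+2) = a j" for j using ar by simp
    have "a j = 0" for j
    proof -
      have e: "j + 4 = (j+2)+2" by simp
      have "a (j+4) = a j" unfolding e a2 by (rule refl)
      then have "even (3 * a j)" using T[of j] a2[of j] by simp
      then show ?thesis using a01[of j] by auto
    qed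
    then have "s = 0" using s_def by simp
    then have False using s2' n3 by simp
  } moreover {
    assume r4: "r = 4"
    then have a4: "a (j+4) = a j" for j using ar by simp
    have z: "a (j+2) = 0" for j
    proof -
      have "even (2 * a j + a (j+2))" using T[of j] a4[of j] by simp
      then have "even (a (j+2))" by simp
      then show ?thesis using a01[of "j+2"] by auto
    qed
    have "a j = 0" for j
    proof -
      have e: "(j + n - 2) + 2 = j + n" using n3 by simp
      have "a j = a ((j + n - 2) + 2)" unfolding e using ap[of j] by simp
      then show ?thesis using z by simp
    qed
    then have "s = 0" using s_def by simp
    then have False using s2' n3 by simp
  } moreover {
    assume "r = 0"
    then have n6: "n = 6*q" using nqr by simp
    have "s = int q * (\<Sum>j<6. a j)" using s_def n6 sum_periodic_mult[of a 6 q] a6 by simp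
    moreover have "(\<Sum>j<6. a j) = a 0 + a 1 + a 2 + a 3 + a 4 + a 5" by (simp add: eval_nat_numeral)
    moreover have "even (a 0 + a 2 + a 4)" using T[of 0] by (simp only: add_0)
    moreover have "even (a 1 + a 3 + a 5)" proof -
      have e: "(1::nat)+2 = 3" "(1::nat)+4=5" by simp_all
      show ?thesis using T[of 1] by (simp only: e)
    qed
    moreover have "q > 0" using n6 n3 by simp
    moreover have "a 0 + a 2 + a 4 = 0 \<or> a 0 + a 2 + a 4 = 2"
      using \<open>even (a 0 + a 2 + a 4)\<close> a01[of 0] a01[of 2] a01[of 4] by auto
    moreover have "a 1 + a 3 + a 5 = 0 \<or> a 1 + a 3 + a 5 = 2"
      using \<open>even (a 1 + a 3 + a 5)\<close> a01[of 1] a01[of 3] a01[of 5] by auto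
    ultimately have "s = 0 \<or> s = 2 * int q \<or> s = 4 * int q" by auto
    then have False using s2' n6 \<open>q > 0\<close> by auto
  }
  ultimately show False by blast
qed

lemma suc_mod_iff:
  fixes n j k :: nat
  assumes "k < n"
  shows "((j+1) mod n = (k+1) mod n) \<longleftrightarrow> k = j mod n"
proof
  assume h: "(j+1) mod n = (k+1) mod n"
  have "(j + 1 + (n - 1)) mod n = (k + 1 + (n - 1)) mod n"
    using h by (metis mod_add_left_eq)
  moreover have "j + 1 + (n - 1) = j + n" "k + 1 + (n - 1) = k + n" using assms by simp_all
  ultimately have "(j + n) mod n = (k + n) mod n" by simp
  then show "k = j mod n" using assms by simp
next
  assume "k = j mod n"
  then show "(j+1) mod n = (k+1) mod n" by (simp add: mod_Suc_eq)
qed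

lemma prism_nbrs:
  fixes n i j :: nat
  assumes n3: "n \<ge> 3" and i: "i \<le> 1"
  shows "{y \<in> prism_vertices n. prism_edge n (i, (j+1) mod n) y}
         = {(i, j mod n), (i, (j+2) mod n), (1-i, (j+1) mod n)}"
proof (rule set_eqI)
  fix y :: "nat \<times> nat"
  obtain i' k where y: "y = (i', k)" by (cases y)
  have e2: "((j+1) mod n + 1) mod n = (j+2) mod n" by (simp add: mod_Suc_eq)
  show "y \<in> {y \<in> prism_vertices n. prism_edge n (i, (j+1) mod n) y}
        \<longleftrightarrow> y \<in> {(i, j mod n), (i, (j+2) mod n), (1-i, (j+1) mod n)}"
  proof (cases "k < n \<and> i' \<le> 1")
    case True
    then have k: "k < n" and i': "i' \<le> 1" by auto
    have F1: "(k = ((j+1) mod n + 1) mod n) \<longleftrightarrow> k = (j+2) mod n" using e2 by simp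
    have F2: "((j+1) mod n = (k + 1) mod n) \<longleftrightarrow> k = j mod n"
      using suc_mod_iff[OF k, of j] by (simp add: mod_Suc_eq)
    have F3: "y \<in> prism_vertices n" using k i' y by (auto simp: prism_vertices_def)
    have F4: "(i \<noteq> i') \<longleftrightarrow> i' = 1 - i" using i i' by arith
    have "prism_edge n (i,(j+1) mod n) y \<longleftrightarrow>
      (i = i' \<and> (k = (j+2) mod n \<or> k = j mod n)) \<or> (k = (j+1) mod n \<and> i' = 1 - i)"
      unfolding prism_edge_def y fst_conv snd_conv F1 F2 F4 by blast
    then show ?thesis using F3 y by blast
  next
    case False
    then have "y \<notin> prism_vertices n" using y by (auto simp: prism_vertices_def)
    moreover have "y \<notin> {(i, j mod n), (i, (j+2) mod n), (1-i, (j+1) mod n)}"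
      using False y n3 i by auto
    ultimately show ?thesis by blast
  qed
qed

lemma prism_nbr_sum:
  fixes n i j :: nat and f :: "nat \<times> nat \<Rightarrow> int"
  assumes n3: "n \<ge> 3" and i: "i \<le> 1"
  shows "(\<Sum>y\<in>{y \<in> prism_vertices n. prism_edge n (i, (j+1) mod n) y}. f y)
         = f (i, j mod n) + f (i, (j+2) mod n) + f (1-i, (j+1) mod n)"
proof -
  have d: "j mod n \<noteq> (j+2) mod n"
  proof
    assume h: "j mod n = (j+2) mod n"
    define k where "k = j mod n"
    have kn: "k < n" using n3 k_def by simp
    have "(j+2) mod n = (k + 2) mod n" unfolding k_def by (metis mod_add_left_eq)
    then have h2: "(k+2) mod n = k" using h k_def by simp
    show False
    proof (cases "k + 2 < n")
      case True then show False using h2 by simp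
    next
      case False
      then have "(k+2) mod n = (k + 2 - n) mod n" by (simp add: le_mod_geq)
      also have "\<dots> = k + 2 - n" using kn n3 by simp
      finally show False using h2 n3 False by simp
    qed
  qed
  have i1: "1 - i \<noteq> i" using i by arith
  have p1: "(i, j mod n) \<notin> {(i, (j+2) mod n), (1-i, (j+1) mod n)}" using d i1 by auto
  have p2: "(i, (j+2) mod n) \<notin> {(1-i, (j+1) mod n)}" using i1 by auto
  show ?thesis unfolding prism_nbrs[OF n3 i]
    using p1 p2 by (simp add: add.assoc)
qed


lemma nat_sums: "2 * (\<Sum>k<m. int k) = int m * (int m - 1)"
  by (induction m) (simp_all add: algebra_simps)

lemma nat_mod_sum: "(\<Sum>k<2*n. int k mod 2) = int n"
proof (induction n)
  case 0 then show ?case by simp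
next
  case (Suc n)
  have e: "2 * Suc n = Suc (Suc (2*n))" by simp
  have "int (2*n) mod 2 = 0" by simp
  moreover have "int (Suc (2*n)) mod 2 = 1" by presburger
  ultimately show ?case unfolding e using Suc by simp
qed

lemma label_sum:
  fixes l :: "'a \<Rightarrow> int"
  assumes "bij_betw l V {0..<int m}"
  shows "(\<Sum>x\<in>V. g (l x)) = (\<Sum>k<m. g (int k))"
proof -
  have eq: "{0..<int m} = int ` {..<m}" using image_atLeastZeroLessThan_int[of "int m"] by simp
  have "(\<Sum>x\<in>V. g (l x)) = sum g {0..<int m}" using sum.reindex_bij_betw[OF assms] by simp
  also have "\<dots> = (\<Sum>k<m. g (int k))" unfolding eq by (simp add: sum.reindex)
  finally show ?thesis .
qed

lemma even3_mod:
  fixes p q r :: int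
  shows "even (p + q + r) \<Longrightarrow> even (p mod 2 + q mod 2 + r mod 2)"
  by presburger

theorem theorem7:
  fixes n :: nat
  assumes "n \<ge> 3"
  shows "\<not> orientable_Zm_distance_magic (2 * n) (prism_vertices n) (prism_edge n)"
proof
  assume "orientable_Zm_distance_magic (2 * n) (prism_vertices n) (prism_edge n)"
  then obtain A l where orA: "is_orientation (prism_vertices n) (prism_edge n) A"
    and lab: "directed_Zm_distance_magic_labeling (2*n) (prism_vertices n) A l"
    unfolding orientable_Zm_distance_magic_def by blast
  define V where "V = prism_vertices n"
  define E where "E = prism_edge n"
  have n3: "n \<ge> 3" by (rule assms)
  have bij: "bij_betw l V {0..<int (2*n)}"
    using lab unfolding V_def directed_Zm_distance_magic_labeling_def by blast
  obtain \<mu> where mu: "\<forall>x\<in>V. ((\<Sum>y\<in>out_nbrs A x. l y) - (\<Sum>y\<in>in_nbrs A x. l y)) mod int (2*n)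
       = \<mu> mod int (2*n)"
    using lab unfolding V_def directed_Zm_distance_magic_labeling_def by blast
  have AV: "A \<subseteq> {(x, y). x \<in> V \<and> y \<in> V \<and> E x y}"
    using orA unfolding is_orientation_def V_def E_def by blast
  have orI: "\<And>x y. x\<in>V \<Longrightarrow> y\<in>V \<Longrightarrow> E x y \<Longrightarrow> ((x,y)\<in>A \<longleftrightarrow> (y,x) \<notin> A)"
    using orA unfolding is_orientation_def V_def E_def by blast
  have Esym: "E x y = E y x" for x y unfolding E_def prism_edge_def by auto
  have finV: "finite V" unfolding V_def prism_vertices_def by simp
  have finA: "finite A"
    by (rule finite_subset[OF _ finite_cartesian_product[OF finV finV]]) (use AV in auto)
  have outV: "out_nbrs A x \<subseteq> V" for x using AV unfolding out_nbrs_def by auto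
  have inV: "in_nbrs A x \<subseteq> V" for x using AV unfolding in_nbrs_def by auto
  have fin_out: "finite (out_nbrs A x)" for x using outV finV finite_subset by blast
  have fin_in: "finite (in_nbrs A x)" for x using inV finV finite_subset by blast
  have disj: "out_nbrs A x \<inter> in_nbrs A x = {}" if "x \<in> V" for x
  proof -
    { fix y assume h1: "(x,y) \<in> A" and h2: "(y,x) \<in> A"
      then have "y \<in> V" "E x y" using AV by auto
      then have False using orI[OF that] h1 h2 by blast }
    then show ?thesis unfolding out_nbrs_def in_nbrs_def by blast
  qed
  have un: "out_nbrs A x \<union> in_nbrs A x = {y\<in>V. E x y}" if x: "x \<in> V" for x
  proof
    show "out_nbrs A x \<union> in_nbrs A x \<subseteq> {y\<in>V. E x y}"
    proof
      fix y assume "y \<in> out_nbrs A x \<union> in_nbrs A x"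
      then have "(x,y) \<in> A \<or> (y,x) \<in> A" unfolding out_nbrs_def in_nbrs_def by blast
      then show "y \<in> {y\<in>V. E x y}" using AV Esym[of x y] by blast
    qed
    show "{y\<in>V. E x y} \<subseteq> out_nbrs A x \<union> in_nbrs A x"
    proof
      fix y assume "y \<in> {y\<in>V. E x y}"
      then have "y \<in> V" "E x y" by auto
      then have "(x,y) \<in> A \<or> (y,x) \<in> A" using orI[OF x] by blast
      then show "y \<in> out_nbrs A x \<union> in_nbrs A x" unfolding out_nbrs_def in_nbrs_def by blast
    qed
  qed
  define D where "D x = (\<Sum>y\<in>out_nbrs A x. l y) - (\<Sum>y\<in>in_nbrs A x. l y)" for x
  have Ddvd: "int (2*n) dvd D x - \<mu>" if "x \<in> V" for x
    using mu that unfolding D_def by (simp add: mod_eq_dvd_iff)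
  have S1: "(\<Sum>x\<in>V. \<Sum>y\<in>out_nbrs A x. l x * l y) = (\<Sum>(x,y)\<in>A. l x * l y)"
  proof -
    have "Sigma V (out_nbrs A) = A" using AV unfolding out_nbrs_def by auto
    then show ?thesis using sum.Sigma[OF finV, of "out_nbrs A" "\<lambda>x y. l x * l y"] fin_out by simp
  qed
  have S2: "(\<Sum>x\<in>V. \<Sum>y\<in>in_nbrs A x. l x * l y) = (\<Sum>(x,y)\<in>A. l x * l y)"
  proof -
    have sw: "Sigma V (in_nbrs A) = prod.swap ` A" using AV unfolding in_nbrs_def by force
    have "(\<Sum>x\<in>V. \<Sum>y\<in>in_nbrs A x. l x * l y) = (\<Sum>(x,y)\<in>prod.swap ` A. l x * l y)"
      using sum.Sigma[OF finV, of "in_nbrs A" "\<lambda>x y. l x * l y"] fin_in sw by simp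
    also have "\<dots> = (\<Sum>(x,y)\<in>A. l y * l x)"
      by (simp add: sum.reindex case_prod_beta)
    also have "\<dots> = (\<Sum>(x,y)\<in>A. l x * l y)" by (simp add: mult.commute)
    finally show ?thesis .
  qed
  have Z: "(\<Sum>x\<in>V. l x * D x) = 0"
    unfolding D_def right_diff_distrib sum_distrib_left sum_subtractf using S1 S2 by simp
  have L: "(\<Sum>x\<in>V. l x) = int n * (2 * int n - 1)"
  proof -
    have "(\<Sum>x\<in>V. l x) = (\<Sum>k<2*n. int k)" using label_sum[OF bij, of "\<lambda>x. x"] by simp
    moreover have "2 * (\<Sum>k<2*n. int k) = int (2*n) * (int (2*n) - 1)" by (rule nat_sums)
    ultimately show ?thesis by simp
  qed
  have "int (2*n) dvd (\<Sum>x\<in>V. l x * (D x - \<mu>))"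
    by (rule dvd_sum) (use Ddvd in auto)
  moreover have "(\<Sum>x\<in>V. l x * (D x - \<mu>)) = - (\<mu> * (\<Sum>x\<in>V. l x))"
    using Z by (simp add: right_diff_distrib sum_subtractf sum_distrib_left mult.commute)
  ultimately have "int (2*n) dvd \<mu> * (int n * (2 * int n - 1))" using L by simp
  then have "int (2*n) dvd int (2*n) * (\<mu> * int n) - \<mu> * (int n * (2 * int n - 1))"
    by (simp add: dvd_diff)
  moreover have "int (2*n) * (\<mu> * int n) - \<mu> * (int n * (2 * int n - 1)) = \<mu> * int n"
    by (simp add: algebra_simps)
  ultimately have "int (2*n) dvd \<mu> * int n" by simp
  then obtain c where c: "\<mu> * int n = 2 * int n * c" by auto
  have "\<mu> = 2 * c" using c n3 by (simp add: mult.commute mult.left_commute)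
  then have mu_even: "even \<mu>" by simp
  have Deven: "even (D x)" if "x \<in> V" for x
  proof -
    have "2 dvd int (2*n)" by simp
    then have "2 dvd D x - \<mu>" using Ddvd[OF that] dvd_trans by blast
    then show ?thesis using mu_even by presburger
  qed
  have Neven: "even (\<Sum>y\<in>{y\<in>V. E x y}. l y)" if x: "x \<in> V" for x
  proof -
    have "(\<Sum>y\<in>{y\<in>V. E x y}. l y) = (\<Sum>y\<in>out_nbrs A x. l y) + (\<Sum>y\<in>in_nbrs A x. l y)"
      unfolding un[OF x, symmetric] using disj[OF x] fin_out fin_in by (simp add: sum.union_disjoint)
    also have "\<dots> = D x + 2 * (\<Sum>y\<in>in_nbrs A x. l y)" unfolding D_def by simp
    finally show ?thesis using Deven[OF x] by simp
  qed
  have NE: "even (l (i, j mod n) + l (i, (j+2) mod n) + l (1-i, (j+1) mod n))" if i: "i \<le> 1" for i j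
  proof -
    have "(i, (j+1) mod n) \<in> V" using i n3 unfolding V_def prism_vertices_def by auto
    from Neven[OF this] show ?thesis unfolding V_def E_def prism_nbr_sum[OF n3 i] .
  qed
  define a where "a j = l (0, j mod n) mod 2" for j
  define b where "b j = l (1, j mod n) mod 2" for j
  have W: "(\<Sum>j<n. a j) + (\<Sum>j<n. b j) = int n"
  proof -
    have "(\<Sum>x\<in>V. l x mod 2) = int n" using label_sum[OF bij, of "\<lambda>x. x mod 2"] nat_mod_sum by simp
    moreover have "(\<Sum>x\<in>V. l x mod 2) = (\<Sum>i\<in>{0,1}. \<Sum>j\<in>{0..<n}. l (i,j) mod 2)"
      unfolding V_def prism_vertices_def by (simp add: sum.cartesian_product)
    moreover have "(\<Sum>j\<in>{0..<n}. l (0,j) mod 2) = (\<Sum>j<n. a j)"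
      unfolding a_def by (rule sum.cong) auto
    moreover have "(\<Sum>j\<in>{0..<n}. l (1,j) mod 2) = (\<Sum>j<n. b j)"
      unfolding b_def by (rule sum.cong) auto
    ultimately show ?thesis by simp
  qed
  show False
  proof (rule comb[OF n3, of a b])
    show "a j = 0 \<or> a j = 1" for j unfolding a_def by presburger
    show "b j = 0 \<or> b j = 1" for j unfolding b_def by presburger
    show "a (j + n) = a j" for j unfolding a_def by simp
    show "b (j + n) = b j" for j unfolding b_def by simp
    show "even (a j + a (j+2) + b (j+1))" for j
      unfolding a_def b_def using even3_mod[OF NE[of 0 j]] by (simp add: mod_add_left_eq)
    show "even (b j + b (j+2) + a (j+1))" for j
      unfolding a_def b_def using even3_mod[OF NE[of 1 j]] by (simp add: mod_add_left_eq)
    show "(\<Sum>j<n. a j) + (\<Sum>j<n. b j) = int n" by (rule W)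
  qed
qed

end
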